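(* For an integer $d\geq2$ and $\mu,\nu\in[0,1]$ define $$f_d(\mu,\nu)=(d-2)(\mu+\nu-\mu\nu)+\mu^2+\nu^2,\qquad g_d(\mu,\nu)=2(d-2)(\mu+\nu-\mu\nu)-d(\mu^2+\nu^2)+3.$$ Then for every $d\geq2$ and all $\mu,\nu\in[0,1]$, the inequality $f_d(\mu,\nu)>d-1$ implies both $g_d(\mu,\nu)<d-1$ and $\mu+\nu>1$. For $d=2$ the converse also holds: if $g_2(\mu,\nu)<1$ and $\mu+\nu>1$ then $f_2(\mu,\nu)>1$. For every $d\geq3$ the converse fails: there exist $\mu,\nu\in[0,1]$ with $\mu+\nu>1$ and $g_d(\mu,\nu)<d-1$ but $f_d(\mu,\nu)\leq d-1$.
   Context: Interpretation (not needed for the claim): for noisy versions $\mu|\varphi_x\rangle\langle\varphi_x|+(1-\mu)I/d$ and $\nu|\psi_y\rangle\langle\psi_y|+(1-\nu)I/d$ of two measurements in mutually unbiased bases of $\mathbb{C}^d$, $f_d>d-1$ characterizes usefulness for $(2,d)$-QRAC and, given $\mu+\nu>1$, $g_d<d-1$ characterizes incompatibility. *)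

theory Defs
  imports Complex_Main
begin

definition f_d :: "nat \<Rightarrow> real \<Rightarrow> real \<Rightarrow> real" where
  "f_d d \<mu> \<nu> = (real d - 2) * (\<mu> + \<nu> - \<mu> * \<nu>) + \<mu>^2 + \<nu>^2"

definition g_d :: "nat \<Rightarrow> real \<Rightarrow> real \<Rightarrow> real" where
  "g_d d \<mu> \<nu> = 2 * (real d - 2) * (\<mu> + \<nu> - \<mu> * \<nu>) - real d * (\<mu>^2 + \<nu>^2) + 3"

end

theory Submission
  imports Defs
begin

lemma part1:
  fixes d :: nat and m n :: real
  assumes "d \<ge> 2" "0 \<le> m" "m \<le> 1" "0 \<le> n" "n \<le> 1"
    and f: "f_d d m n > real d - 1"
  shows "g_d d m n < real d - 1 \<and> m + n > 1"
proof -
  define D where "D = real d - 2"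
  have D0: "D \<ge> 0" using assms(1) unfolding D_def by simp
  define s where "s = m + n - m*n"
  define q where "q = m^2 + n^2"
  have s1: "s \<le> 1" unfolding s_def using assms(3,5) mult_nonneg_nonneg[of "1-m" "1-n"]
    by (simp add: algebra_simps)
  have fq: "D*s + q > D + 1" using f unfolding f_d_def D_def s_def q_def by simp
  have Ds: "D*s \<le> D" using mult_left_mono[OF s1 D0] by simp
  have q1: "q > 1" using fq Ds by linarith
  have gq: "g_d d m n - (real d - 1) = 2*(D*s) - (D+2)*q + 2 - D"
    unfolding g_d_def D_def s_def q_def by (simp add: algebra_simps)
  have "(D+2)*q > (D+2)*1" using q1 D0 by (intro mult_strict_left_mono) auto
  hence "2*(D*s) - (D+2)*q + 2 - D < 0" using Ds by (simp add: algebra_simps)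
  hence g: "g_d d m n < real d - 1" using gq by linarith
  have "m + n > 1"
  proof (rule ccontr)
    assume "\<not> m + n > 1"
    hence "m^2 \<le> m" "n^2 \<le> n" using assms(2-5)
      by (auto simp: power2_eq_square intro: mult_left_le_one_le)
    thus False using q1 \<open>\<not> m + n > 1\<close> unfolding q_def by linarith
  qed
  thus ?thesis using g by simp
qed

theorem proposition4:
  shows "(\<forall>d::nat. d \<ge> 2 \<longrightarrow> (\<forall>\<mu> \<in> {0..1}. \<forall>\<nu> \<in> {0..1}.
            f_d d \<mu> \<nu> > real d - 1 \<longrightarrow> g_d d \<mu> \<nu> < real d - 1 \<and> \<mu> + \<nu> > 1))
      \<and> (\<forall>\<mu> \<in> {0..1}. \<forall>\<nu> \<in> {0..1}.
            g_d 2 \<mu> \<nu> < 1 \<and> \<mu> + \<nu> > 1 \<longrightarrow> f_d 2 \<mu> \<nu> > 1)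
      \<and> (\<forall>d::nat. d \<ge> 3 \<longrightarrow> (\<exists>\<mu> \<in> {0..1}. \<exists>\<nu> \<in> {0..1}.
            \<mu> + \<nu> > 1 \<and> g_d d \<mu> \<nu> < real d - 1 \<and> f_d d \<mu> \<nu> \<le> real d - 1))"
proof (intro conjI allI impI ballI)
  fix d :: nat and m n :: real
  assume "d \<ge> 2" "m \<in> {0..1}" "n \<in> {0..1}" "f_d d m n > real d - 1"
  thus "g_d d m n < real d - 1" "m + n > 1" using part1[of d m n] by auto
next
  fix m n :: real
  assume "g_d 2 m n < 1 \<and> m + n > 1"
  thus "f_d 2 m n > 1" unfolding f_d_def g_d_def by simp
next
  fix d :: nat
  assume d: "d \<ge> 3"
  hence "real d \<ge> 3" by simp
  show "\<exists>\<mu> \<in> {0..1}. \<exists>\<nu> \<in> {0..1}.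
            \<mu> + \<nu> > 1 \<and> g_d d \<mu> \<nu> < real d - 1 \<and> f_d d \<mu> \<nu> \<le> real d - 1"
    apply (rule bexI[of _ "7/10"], rule bexI[of _ "7/10"])
    using \<open>real d \<ge> 3\<close> by (auto simp: f_d_def g_d_def power2_eq_square field_simps)
qed

end
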